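(* Let $P \subseteq \mathbb{R}^d$ be a full-dimensional polytope and let $s_0 > 0$ be a discontinuity point of $L_P$. If $s_0$ is a left-discontinuity, then $L_P(s_0) - \lim_{s \to s_0^-} L_P(s)$ equals the number of integer points contained in the union of the front facets of $s_0 P$. If $s_0$ is a right-discontinuity, then $L_P(s_0) - \lim_{s \to s_0^+} L_P(s)$ equals the number of integer points contained in the union of the back facets of $s_0 P$.
   Context: For a polytope $P \subseteq \mathbb{R}^d$ and real $s \ge 0$, $L_P(s) = \#(sP \cap \mathbb{Z}^d)$, where $sP = \{sx : x \in P\}$. Write a full-dimensional polytope as $P = \bigcap_{i=1}^n \{x : \langle a_i, x\rangle \le b_i\}$ where $F_i = P \cap \{x : \langle a_i, x\rangle = b_i\}$, $i=1,\dots,n$, are exactly the facets of $P$. The facet $F_i$ is a front facet if $b_i > 0$ and a back facet if $b_i < 0$ (facets with $b_i=0$ are neither). For $s_0>0$, the front (resp. back) facets of $s_0P$ are the sets $s_0F_i$ with $F_i$ a front (resp. back) facet of $P$. *)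

theory Defs
  imports "HOL-Analysis.Analysis"
begin

definition int_points :: "(real^'n) set \<Rightarrow> (real^'n) set" where
  "int_points S = {x \<in> S. \<forall>i. x $ i \<in> \<int>}"

definition lattice_count :: "(real^'n) set \<Rightarrow> real \<Rightarrow> nat" where
  "lattice_count P s = card (int_points ((\<lambda>x. s *\<^sub>R x) ` P))"

end

theory Submission
  imports Defs
begin

lemma finite_int_ball: "finite {x::real^'n. (\<forall>i. x$i \<in> \<int>) \<and> norm x \<le> R}"
proof -
  have "{x::real^'n. (\<forall>i. x$i \<in> \<int>) \<and> norm x \<le> R} \<subseteq>
        (\<lambda>f. \<chi> i. real_of_int (f i)) ` (PiE UNIV (\<lambda>i. {-\<lceil>R\<rceil>..\<lceil>R\<rceil>}))"
  proof
    fix x :: "real^'n" assume x: "x \<in> {x. (\<forall>i. x$i \<in> \<int>) \<and> norm x \<le> R}"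
    define f where "f = (\<lambda>i. \<lfloor>x$i\<rfloor>)"
    have xi: "x$i = real_of_int (f i)" for i using x by (auto simp: f_def elim!: Ints_cases)
    have "f i \<in> {-\<lceil>R\<rceil>..\<lceil>R\<rceil>}" for i
    proof -
      have "\<bar>x$i\<bar> \<le> R" using x component_le_norm_cart[of x i] by auto
      hence "real_of_int \<bar>f i\<bar> \<le> R" using xi[of i] by simp
      hence "real_of_int \<bar>f i\<bar> < real_of_int (\<lceil>R\<rceil> + 1)" using le_of_int_ceiling[of R] by simp linarith
      hence "\<bar>f i\<bar> < \<lceil>R\<rceil> + 1" by (simp only: of_int_less_iff)
      thus ?thesis by auto
    qed
    hence "f \<in> PiE UNIV (\<lambda>i. {-\<lceil>R\<rceil>..\<lceil>R\<rceil>})" by auto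
    moreover have "x = (\<chi> i. real_of_int (f i))" using xi by (simp add: vec_eq_iff)
    ultimately show "x \<in> (\<lambda>f. \<chi> i. real_of_int (f i)) ` (PiE UNIV (\<lambda>i. {-\<lceil>R\<rceil>..\<lceil>R\<rceil>}))" by blast
  qed
  moreover have "finite (PiE (UNIV::'n set) (\<lambda>i. {-\<lceil>R\<rceil>..\<lceil>R\<rceil>}))"
    by (intro finite_PiE) auto
  ultimately show ?thesis using finite_subset by blast
qed

lemma finite_int_points: assumes "bounded (S::(real^'n) set)" shows "finite (int_points S)"
proof -
  obtain M where M: "\<forall>x\<in>S. norm x \<le> M" using assms bounded_pos by blast
  have "int_points S \<subseteq> {x::real^'n. (\<forall>i. x$i \<in> \<int>) \<and> norm x \<le> M}"
    using M by (auto simp: int_points_def)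
  thus ?thesis using finite_int_ball finite_subset by blast
qed

lemma scale_mem:
  fixes a :: "nat \<Rightarrow> real^'n"
  assumes "s > 0" "P = (\<Inter>i\<in>{..<n}. {x. a i \<bullet> x \<le> b i})"
  shows "z \<in> (\<lambda>x. s *\<^sub>R x) ` P \<longleftrightarrow> (\<forall>i<n. a i \<bullet> z \<le> s * b i)"
proof -
  have "z \<in> (\<lambda>x. s *\<^sub>R x) ` P \<longleftrightarrow> inverse s *\<^sub>R z \<in> P"
    using assms(1) by (auto simp: image_iff intro!: bexI[of _ "inverse s *\<^sub>R z"])
  also have "\<dots> \<longleftrightarrow> (\<forall>i<n. a i \<bullet> z \<le> s * b i)"
    using assms by (auto simp: field_simps)
  finally show ?thesis .
qed

lemma scale_face:
  fixes a :: "real^'n"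
  assumes "s > 0"
  shows "z \<in> (\<lambda>x. s *\<^sub>R x) ` (P \<inter> {x. a \<bullet> x = c}) \<longleftrightarrow> z \<in> (\<lambda>x. s *\<^sub>R x) ` P \<and> a \<bullet> z = s * c"
proof -
  have e: "z \<in> (\<lambda>x. s *\<^sub>R x) ` S \<longleftrightarrow> inverse s *\<^sub>R z \<in> S" for S
    using assms by (auto simp: image_iff intro!: bexI[of _ "inverse s *\<^sub>R z"])
  show ?thesis unfolding e using assms by (auto simp: field_simps)
qed

lemma key:
  fixes P :: "(real^'n) set" and a :: "nat \<Rightarrow> real^'n" and b :: "nat \<Rightarrow> real" and F :: "real filter"
  assumes bP: "bounded P" and Pdef: "P = (\<Inter>i\<in>{..<n}. {x. a i \<bullet> x \<le> b i})" and s0: "s0 > 0"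
    and lim: "((\<lambda>s. s) \<longlongrightarrow> s0) F"
    and h1: "\<forall>i<n. \<not> Q i \<longrightarrow> eventually (\<lambda>s. s0 * b i \<le> s * b i) F"
    and h2: "\<forall>i<n. Q i \<longrightarrow> eventually (\<lambda>s. s * b i < s0 * b i) F"
  shows "eventually (\<lambda>s. int_points ((\<lambda>x. s *\<^sub>R x) ` P) =
           int_points ((\<lambda>x. s0 *\<^sub>R x) ` P) -
           int_points (\<Union>i\<in>{i. i < n \<and> Q i}. (\<lambda>x. s0 *\<^sub>R x) ` (P \<inter> {x. a i \<bullet> x = b i}))) F"
proof -
  obtain M where M: "M > 0" "\<forall>x\<in>P. norm x \<le> M" using bP bounded_pos by blast
  define C where "C = {x::real^'n. (\<forall>i. x$i \<in> \<int>) \<and> norm x \<le> 2* s0*M}"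
  have fC: "finite C" using finite_int_ball unfolding C_def .
  have ev_pos: "eventually (\<lambda>s. 0 < s \<and> s < 2* s0) F"
    using eventually_conj[OF order_tendstoD(1)[OF lim, of 0] order_tendstoD(2)[OF lim, of "2* s0"]] s0
    by simp
  have lim2: "((\<lambda>s. s * b i) \<longlongrightarrow> s0 * b i) F" for i by (intro tendsto_mult_right lim)
  define mem where "mem s z \<longleftrightarrow> (\<forall>i<n. a i \<bullet> z \<le> s * b i)" for s z
  have ev_z: "eventually (\<lambda>s. mem s z \<longleftrightarrow> mem s0 z \<and> \<not>(\<exists>i<n. Q i \<and> a i \<bullet> z = s0 * b i)) F" for z
  proof (cases "mem s0 z")
    case m0: True
    show ?thesis
    proof (cases "\<exists>i<n. Q i \<and> a i \<bullet> z = s0 * b i")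
      case True
      then obtain i where i: "i<n" "Q i" "a i \<bullet> z = s0 * b i" by blast
      have "eventually (\<lambda>s. s * b i < s0 * b i) F" using h2 i by blast
      then show ?thesis
        by (rule eventually_mono) (use i in \<open>auto simp: mem_def not_le\<close>)
    next
      case nex: False
      have "\<forall>i\<in>{..<n}. eventually (\<lambda>s. a i \<bullet> z \<le> s * b i) F"
      proof
        fix i assume i: "i \<in> {..<n}"
        have le: "a i \<bullet> z \<le> s0 * b i" using m0 i by (auto simp: mem_def)
        show "eventually (\<lambda>s. a i \<bullet> z \<le> s * b i) F"
        proof (cases "Q i")
          case True
          with nex i le have "a i \<bullet> z < s0 * b i" by force
          from order_tendstoD(1)[OF lim2 this] show ?thesis
            by (rule eventually_mono) simp
        next
          case False
          with h1 i have "eventually (\<lambda>s. s0*b i \<le> s*b i) F" by auto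
          then show ?thesis by (rule eventually_mono) (use le in linarith)
        qed
      qed
      hence "eventually (\<lambda>s. \<forall>i\<in>{..<n}. a i \<bullet> z \<le> s * b i) F"
        by (simp add: eventually_ball_finite)
      then show ?thesis
        by (rule eventually_mono) (use m0 nex in \<open>auto simp: mem_def\<close>)
    qed
  next
    case False
    then obtain i where i: "i<n" "s0 * b i < a i \<bullet> z" by (auto simp: mem_def not_le)
    from order_tendstoD(2)[OF lim2 i(2)] show ?thesis
      by (rule eventually_mono) (use i False in \<open>force simp: mem_def not_le\<close>)
  qed
  have ev_all: "eventually (\<lambda>s. \<forall>z\<in>C. (mem s z \<longleftrightarrow> mem s0 z \<and> \<not>(\<exists>i<n. Q i \<and> a i \<bullet> z = s0 * b i))) F"
    by (intro eventually_ball_finite[OF fC] ballI ev_z)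
  have memS: "z \<in> (\<lambda>x. t *\<^sub>R x) ` P \<longleftrightarrow> mem t z" if "t>0" for t z
    using scale_mem[OF that Pdef] mem_def by simp
  have U: "z \<in> (\<Union>i\<in>{i. i<n \<and> Q i}. (\<lambda>x. s0 *\<^sub>R x) ` (P \<inter> {x. a i \<bullet> x = b i})) \<longleftrightarrow>
        mem s0 z \<and> (\<exists>i<n. Q i \<and> a i \<bullet> z = s0 * b i)" for z
    by (simp only: UN_iff scale_face[OF s0] memS[OF s0] mem_Collect_eq) blast
  have bnd: "norm z \<le> 2* s0*M" if zin: "z \<in> (\<lambda>x. t *\<^sub>R x) ` P" and tp: "0 < t" and tle: "t \<le> 2* s0" for z t
  proof -
    obtain x where x: "x \<in> P" "z = t *\<^sub>R x" using zin by blast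
    have "norm z = t * norm x" using x tp by simp
    also have "\<dots> \<le> (2* s0) * M" using M x tp tle by (intro mult_mono) auto
    finally show ?thesis by simp
  qed
  show ?thesis using ev_all ev_pos
  proof (rule eventually_elim2)
    fix s assume all: "\<forall>z\<in>C. (mem s z \<longleftrightarrow> mem s0 z \<and> \<not>(\<exists>i<n. Q i \<and> a i \<bullet> z = s0 * b i))"
      and s: "0 < s \<and> s < 2* s0"
    show "int_points ((\<lambda>x. s *\<^sub>R x) ` P) =
           int_points ((\<lambda>x. s0 *\<^sub>R x) ` P) -
           int_points (\<Union>i\<in>{i. i < n \<and> Q i}. (\<lambda>x. s0 *\<^sub>R x) ` (P \<inter> {x. a i \<bullet> x = b i}))"
    proof (rule set_eqI)
      fix z
      show "z \<in> int_points ((\<lambda>x. s *\<^sub>R x) ` P) \<longleftrightarrow> z \<in> int_points ((\<lambda>x. s0 *\<^sub>R x) ` P) -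
           int_points (\<Union>i\<in>{i. i < n \<and> Q i}. (\<lambda>x. s0 *\<^sub>R x) ` (P \<inter> {x. a i \<bullet> x = b i}))"
      proof
        assume z: "z \<in> int_points ((\<lambda>x. s *\<^sub>R x) ` P)"
        hence zC: "z \<in> C" using bnd[of z s] s by (auto simp: C_def int_points_def)
        with z all s show "z \<in> int_points ((\<lambda>x. s0 *\<^sub>R x) ` P) -
           int_points (\<Union>i\<in>{i. i < n \<and> Q i}. (\<lambda>x. s0 *\<^sub>R x) ` (P \<inter> {x. a i \<bullet> x = b i}))"
          using memS[of s z] memS[OF s0, of z] U[of z] by (auto simp: int_points_def)
      next
        assume z: "z \<in> int_points ((\<lambda>x. s0 *\<^sub>R x) ` P) -
           int_points (\<Union>i\<in>{i. i < n \<and> Q i}. (\<lambda>x. s0 *\<^sub>R x) ` (P \<inter> {x. a i \<bullet> x = b i}))"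
        hence zC: "z \<in> C" using bnd[of z s0] s0 by (auto simp: C_def int_points_def)
        with z all s show "z \<in> int_points ((\<lambda>x. s *\<^sub>R x) ` P)"
          using memS[of s z] memS[OF s0, of z] U[of z] by (auto simp: int_points_def)
      qed
    qed
  qed
qed

theorem lemma3p1:
  fixes P :: "(real^'n) set" and n :: nat
    and a :: "nat \<Rightarrow> real^'n" and b :: "nat \<Rightarrow> real" and s0 :: real
  assumes "polytope P"
    and "aff_dim P = int CARD('n)"
    and "P = (\<Inter>i\<in>{..<n}. {x. a i \<bullet> x \<le> b i})"
    and "\<forall>i<n. (P \<inter> {x. a i \<bullet> x = b i}) facet_of P"
    and "\<forall>F. F facet_of P \<longrightarrow> (\<exists>i<n. F = P \<inter> {x. a i \<bullet> x = b i})"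
    and "s0 > 0"
    and "\<not> isCont (\<lambda>s. real (lattice_count P s)) s0"
  shows "(\<not> continuous (at_left s0) (\<lambda>s. real (lattice_count P s)) \<longrightarrow>
            ((\<lambda>s. real (lattice_count P s)) \<longlongrightarrow>
               real (lattice_count P s0)
               - real (card (int_points (\<Union>i\<in>{i. i < n \<and> b i > 0}.
                     (\<lambda>x. s0 *\<^sub>R x) ` (P \<inter> {x. a i \<bullet> x = b i}))))) (at_left s0))
       \<and> (\<not> continuous (at_right s0) (\<lambda>s. real (lattice_count P s)) \<longrightarrow>
            ((\<lambda>s. real (lattice_count P s)) \<longlongrightarrow>
               real (lattice_count P s0)
               - real (card (int_points (\<Union>i\<in>{i. i < n \<and> b i < 0}.
                     (\<lambda>x. s0 *\<^sub>R x) ` (P \<inter> {x. a i \<bullet> x = b i}))))) (at_right s0))"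
proof -
  have bP: "bounded P" using assms(1) polytope_imp_compact compact_imp_bounded by blast
  have fA: "finite (int_points ((\<lambda>x. s0 *\<^sub>R x) ` P))"
    by (intro finite_int_points bounded_scaling bP)
  have cd: "real (card (int_points ((\<lambda>x. s0 *\<^sub>R x) ` P) - int_points (\<Union>i\<in>I. (\<lambda>x. s0 *\<^sub>R x) ` (P \<inter> {x. a i \<bullet> x = b i}))))
      = real (lattice_count P s0) - real (card (int_points (\<Union>i\<in>I. (\<lambda>x. s0 *\<^sub>R x) ` (P \<inter> {x. a i \<bullet> x = b i}))))" for I
  proof -
    have sub: "int_points (\<Union>i\<in>I. (\<lambda>x. s0 *\<^sub>R x) ` (P \<inter> {x. a i \<bullet> x = b i})) \<subseteq> int_points ((\<lambda>x. s0 *\<^sub>R x) ` P)"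
      by (auto simp: int_points_def)
    have fB: "finite (int_points (\<Union>i\<in>I. (\<lambda>x. s0 *\<^sub>R x) ` (P \<inter> {x. a i \<bullet> x = b i})))"
      using finite_subset[OF sub fA] .
    show ?thesis unfolding lattice_count_def
      using card_Diff_subset[OF fB sub] card_mono[OF fA sub] by (simp add: of_nat_diff)
  qed
  have left: "eventually (\<lambda>s. s < s0) (at_left s0)" by (simp add: eventually_at_filter)
  have right: "eventually (\<lambda>s. s > s0) (at_right s0)" by (simp add: eventually_at_filter)
  have L: "eventually (\<lambda>s. int_points ((\<lambda>x. s *\<^sub>R x) ` P) =
           int_points ((\<lambda>x. s0 *\<^sub>R x) ` P) -
           int_points (\<Union>i\<in>{i. i < n \<and> b i > 0}. (\<lambda>x. s0 *\<^sub>R x) ` (P \<inter> {x. a i \<bullet> x = b i}))) (at_left s0)"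
  proof (rule key[OF bP assms(3) assms(6) tendsto_ident_at])
    show "\<forall>i<n. \<not> 0 < b i \<longrightarrow> eventually (\<lambda>s. s0 * b i \<le> s * b i) (at_left s0)"
      using left by (auto elim!: eventually_mono intro: mult_right_mono_neg)
    show "\<forall>i<n. 0 < b i \<longrightarrow> eventually (\<lambda>s. s * b i < s0 * b i) (at_left s0)"
      using left by (auto elim!: eventually_mono intro: mult_strict_right_mono)
  qed
  have R: "eventually (\<lambda>s. int_points ((\<lambda>x. s *\<^sub>R x) ` P) =
           int_points ((\<lambda>x. s0 *\<^sub>R x) ` P) -
           int_points (\<Union>i\<in>{i. i < n \<and> b i < 0}. (\<lambda>x. s0 *\<^sub>R x) ` (P \<inter> {x. a i \<bullet> x = b i}))) (at_right s0)"
  proof (rule key[OF bP assms(3) assms(6) tendsto_ident_at])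
    show "\<forall>i<n. \<not> b i < 0 \<longrightarrow> eventually (\<lambda>s. s0 * b i \<le> s * b i) (at_right s0)"
      using right by (auto elim!: eventually_mono intro: mult_right_mono)
    show "\<forall>i<n. b i < 0 \<longrightarrow> eventually (\<lambda>s. s * b i < s0 * b i) (at_right s0)"
      using right by (auto elim!: eventually_mono intro: mult_strict_right_mono_neg)
  qed
  show ?thesis
  proof (intro conjI impI)
    show "((\<lambda>s. real (lattice_count P s)) \<longlongrightarrow>
               real (lattice_count P s0)
               - real (card (int_points (\<Union>i\<in>{i. i < n \<and> b i > 0}.
                     (\<lambda>x. s0 *\<^sub>R x) ` (P \<inter> {x. a i \<bullet> x = b i}))))) (at_left s0)"
      by (rule tendsto_eventually, rule eventually_mono[OF L]) (simp add: lattice_count_def cd[unfolded lattice_count_def])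
    show "((\<lambda>s. real (lattice_count P s)) \<longlongrightarrow>
               real (lattice_count P s0)
               - real (card (int_points (\<Union>i\<in>{i. i < n \<and> b i < 0}.
                     (\<lambda>x. s0 *\<^sub>R x) ` (P \<inter> {x. a i \<bullet> x = b i}))))) (at_right s0)"
      by (rule tendsto_eventually, rule eventually_mono[OF R]) (simp add: lattice_count_def cd[unfolded lattice_count_def])
  qed
qed

end
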